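(* Fix $d\ge1$, $N\ge1$, $\alpha\ge2$, powers $P_s,P_r>0$, gains $\xi_{u,v}>0$, and positions $\mathbf{s},\mathbf{1},\dots,\mathbf{N}\in\mathbb{R}^d$ of the source and destinations with $\mathbf{s}\neq\mathbf{j}$ for all $j$. For a relay position $\mathbf{r}\in\mathbb{R}^d$ let $\mathsf{SNR}_{u,v}=\xi_{u,v}P_u/\|\mathbf{u}-\mathbf{v}\|^{\alpha}$ for $(u,v)\in\{(s,r),(s,j),(r,j)\}$ (an SNR being $+\infty$ when the corresponding distance is $0$), and for $\rho\in[0,1]$, $j=1,\dots,N$, define $$f_j(\rho,\mathbf{r})=\mathsf{SNR}_{s,j}+\mathsf{SNR}_{r,j}+2\rho\sqrt{\mathsf{SNR}_{s,j}\mathsf{SNR}_{r,j}},\qquad g_j(\rho,\mathbf{r})=(1-\rho^2)(\mathsf{SNR}_{s,j}+\mathsf{SNR}_{s,r}).$$ Then for every fixed $\rho\in[0,1]$, $f_j(\rho,\cdot)$ and $g_j(\rho,\cdot)$ are quasi-concave in $\mathbf{r}\in\mathbb{R}^d$. Furthermore, $(t,\mathbf{r})\mapsto f_j(\sqrt t,\mathbf{r})$ is quasi-concave on $[0,1]\times\mathbb{R}^d$ (i.e., $f_j$ is quasi-concave in $(\rho^2,\mathbf{r})$).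
   Context: Setting: real AWGN multicast relay channel with source $s$, relay $r$ at position $\mathbf{r}$, destinations $1,\dots,N$, path-loss exponent $\alpha$ and channel gain $a_{u,v}=\sqrt{\xi_{u,v}}/\|\mathbf{u}-\mathbf{v}\|^{\alpha/2}$, so $\mathsf{SNR}_{u,v}=a_{u,v}^2P_u$; $\rho$ is the source–relay input correlation coefficient. A function $F$ (possibly taking value $+\infty$) on a convex set is quasi-concave if $F(\lambda x_1+(1-\lambda)x_2)\ge\min(F(x_1),F(x_2))$ for all $x_1,x_2$ and $\lambda\in[0,1]$. *)

theory Defs
  imports "HOL-Analysis.Analysis" "HOL-Library.Extended_Real"
begin

definition quasiconcave_on :: "'a::real_vector set \<Rightarrow> ('a \<Rightarrow> ereal) \<Rightarrow> bool" where
  "quasiconcave_on S F \<longleftrightarrow>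
     (\<forall>x1\<in>S. \<forall>x2\<in>S. \<forall>l\<in>{0..1::real}.
        F (l *\<^sub>R x1 + (1 - l) *\<^sub>R x2) \<ge> min (F x1) (F x2))"

definition snr :: "real \<Rightarrow> real \<Rightarrow> real \<Rightarrow> 'a::euclidean_space \<Rightarrow> 'a \<Rightarrow> ereal" where
  "snr alpha xi P u v = (if u = v then \<infinity> else ereal (xi * P / (norm (u - v) powr alpha)))"

definition esqrt :: "ereal \<Rightarrow> ereal" where
  "esqrt x = (if x = \<infinity> then \<infinity> else ereal (sqrt (real_of_ereal x)))"

definition fj :: "real \<Rightarrow> real \<Rightarrow> real \<Rightarrow> real \<Rightarrow> real \<Rightarrow> 'a::euclidean_space \<Rightarrow> 'a \<Rightarrow> real \<Rightarrow> 'a \<Rightarrow> ereal" where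
  "fj alpha Ps Pr xisj xirj s dj rho r =
     snr alpha xisj Ps s dj + snr alpha xirj Pr r dj
     + ereal (2 * rho) * esqrt (snr alpha xisj Ps s dj * snr alpha xirj Pr r dj)"

definition gj :: "real \<Rightarrow> real \<Rightarrow> real \<Rightarrow> real \<Rightarrow> 'a::euclidean_space \<Rightarrow> 'a \<Rightarrow> real \<Rightarrow> 'a \<Rightarrow> ereal" where
  "gj alpha Ps xisj xisr s dj rho r =
     ereal (1 - rho\<^sup>2) * (snr alpha xisj Ps s dj + snr alpha xisr Ps s r)"

end

theory Submission
  imports Defs
begin


definition VV :: "real \<Rightarrow> real \<Rightarrow> real \<Rightarrow> real \<Rightarrow> real \<Rightarrow> real" where
  "VV a C alpha t u = a + C / u powr alpha + 2 * sqrt t * sqrt (a * (C / u powr alpha))"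

lemma sqrt_concave:
  fixes X Y l :: real
  assumes "X \<ge> 0" "Y \<ge> 0" "0 \<le> l" "l \<le> 1"
  shows "l * sqrt X + (1 - l) * sqrt Y \<le> sqrt (l * X + (1 - l) * Y)"
proof (rule real_le_rsqrt)
  have "0 \<le> (sqrt X - sqrt Y)\<^sup>2" by simp
  then have "2 * sqrt X * sqrt Y \<le> X + Y"
    using assms by (simp add: power2_diff)
  moreover have "l * (1 - l) \<ge> 0" using assms by simp
  ultimately have "l * (1 - l) * (2 * sqrt X * sqrt Y) \<le> l * (1 - l) * (X + Y)"
    by (rule mult_left_mono)
  moreover have "(l * sqrt X + (1 - l) * sqrt Y)\<^sup>2 = l\<^sup>2 * X + (1-l)\<^sup>2 * Y + l * (1 - l) * (2 * sqrt X * sqrt Y)"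
    using assms by (simp add: power2_eq_square algebra_simps)
  ultimately show "(l * sqrt X + (1 - l) * sqrt Y)\<^sup>2 \<le> l * X + (1 - l) * Y"
    by (simp add: power2_eq_square algebra_simps)
qed

lemma key:
  fixes a C alpha t u c :: real
  assumes a: "a > 0" and C: "C > 0" and al: "alpha \<ge> 2" and t: "t \<ge> 0" and u: "u > 0"
    and K: "c - a > 0"
  shows "c \<le> VV a C alpha t u \<longleftrightarrow>
     u powr (alpha/2) \<le> sqrt C * (sqrt (c - a + t * a) + sqrt (t * a)) / (c - a)"
proof -
  define K where "K = c - a"
  define g where "g = alpha / 2"
  define x where "x = sqrt C / u powr g"
  define S where "S = sqrt (t * a)"
  define R where "R = sqrt (K + t * a)"
  have upos: "u powr g > 0" using u by simp
  have x0: "x > 0" using C upos by (simp add: x_def)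
  have S0: "S \<ge> 0" using a t by (simp add: S_def)
  have "t * a \<ge> 0" using a t by simp
  then have R0: "R > 0" using K by (simp add: R_def K_def)
  have RS: "R\<^sup>2 = K + S\<^sup>2" using a t K by (simp add: R_def S_def K_def)
  have ua: "u powr alpha = (u powr g)\<^sup>2"
    by (simp add: g_def power2_eq_square flip: powr_add)
  have b: "C / u powr alpha = x\<^sup>2"
    using C by (simp add: ua x_def power_divide)
  have sab: "sqrt (a * (C / u powr alpha)) = sqrt a * x"
    using x0 by (simp add: b real_sqrt_mult)
  have V: "VV a C alpha t u = a + x\<^sup>2 + 2 * S * x"
    using x0 by (simp add: VV_def b sab S_def real_sqrt_mult)
  have "c \<le> VV a C alpha t u \<longleftrightarrow> R\<^sup>2 \<le> (x + S)\<^sup>2"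
    unfolding V RS K_def by (simp add: power2_eq_square algebra_simps)
  also have "\<dots> \<longleftrightarrow> R \<le> x + S"
    using R0 x0 S0 by (simp add: power2_le_iff_abs_le abs_of_nonneg)
  also have "\<dots> \<longleftrightarrow> K \<le> x * (R + S)"
  proof -
    have "K = (R - S) * (R + S)" using RS by (simp add: power2_eq_square algebra_simps)
    then have "K \<le> x * (R + S) \<longleftrightarrow> (R - S) * (R + S) \<le> x * (R + S)" by simp
    also have "\<dots> \<longleftrightarrow> R - S \<le> x" using R0 S0 by (intro mult_le_cancel_right_pos) simp
    finally show ?thesis by linarith
  qed
  also have "\<dots> \<longleftrightarrow> K * u powr g \<le> sqrt C * (R + S)"
    using upos by (simp add: x_def field_simps)
  also have "\<dots> \<longleftrightarrow> u powr g \<le> sqrt C * (R + S) / K"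
    using K by (simp add: K_def field_simps)
  finally show ?thesis by (simp add: g_def R_def S_def K_def)
qed

lemma VV_ge_a:
  assumes "a > 0" "C > 0" "t \<ge> 0" "u > 0"
  shows "a \<le> VV a C alpha t u"
  using assms by (simp add: VV_def)

lemma core:
  fixes a C alpha t1 t2 l u u1 u2 c :: real
  assumes a: "a > 0" and C: "C > 0" and al: "alpha \<ge> 2"
    and t1: "t1 \<ge> 0" and t2: "t2 \<ge> 0" and l: "0 \<le> l" "l \<le> 1"
    and u: "u > 0" and uu: "u \<le> l * u1 + (1 - l) * u2" and u1: "u1 \<ge> 0" and u2: "u2 \<ge> 0"
    and h1: "u1 > 0 \<Longrightarrow> c \<le> VV a C alpha t1 u1"
    and h2: "u2 > 0 \<Longrightarrow> c \<le> VV a C alpha t2 u2"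
  shows "c \<le> VV a C alpha (l * t1 + (1 - l) * t2) u"
proof (cases "c - a > 0")
  case False
  then show ?thesis using VV_ge_a[OF a C _ u, of "l * t1 + (1 - l) * t2" alpha] t1 t2 l by simp
next
  case K: True
  define g where "g = alpha / 2"
  have g1: "g \<ge> 1" using al by (simp add: g_def)
  define P where "P t = sqrt C * (sqrt (c - a + t * a) + sqrt (t * a)) / (c - a)" for t
  have Ppos: "P t > 0" if "t \<ge> 0" for t
  proof -
    have "t * a \<ge> 0" using a that by simp
    then have "sqrt (c - a + t * a) > 0" "sqrt (t * a) \<ge> 0" using K by auto
    then show ?thesis using C K unfolding P_def
      by (intro divide_pos_pos mult_pos_pos add_pos_nonneg) auto
  qed
  define Q where "Q t = P t powr (1 / g)" for t
  have Qpos: "Q t > 0" if "t \<ge> 0" for t using Ppos[OF that] by (simp add: Q_def)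
  have QP: "Q t powr g = P t" if "t \<ge> 0" for t
    using Ppos[OF that] g1 by (simp add: Q_def powr_powr)
  have bound: "ui \<le> Q ti" if "ui \<ge> 0" "ti \<ge> 0" "ui > 0 \<Longrightarrow> c \<le> VV a C alpha ti ui" for ui ti
  proof (cases "ui > 0")
    case True
    then have "ui powr g \<le> P ti"
      using key[OF a C al that(2) True K] that(3) by (simp add: g_def P_def)
    then have "(ui powr g) powr (1/g) \<le> P ti powr (1/g)"
      using True g1 by (intro powr_mono2) auto
    then show ?thesis using True g1 by (simp add: Q_def powr_powr)
  next
    case False
    then show ?thesis using Qpos[OF that(2)] that(1) by simp
  qed
  have b1: "u1 \<le> Q t1" by (rule bound[OF u1 t1 h1])
  have b2: "u2 \<le> Q t2" by (rule bound[OF u2 t2 h2])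
  define M where "M = l * Q t1 + (1 - l) * Q t2"
  have "l * u1 \<le> l * Q t1" using b1 l by (intro mult_left_mono) auto
  moreover have "(1 - l) * u2 \<le> (1 - l) * Q t2" using b2 l by (intro mult_left_mono) auto
  ultimately have uM: "u \<le> M" unfolding M_def using uu by linarith
  have "u powr g \<le> M powr g" using uM u g1 by (intro powr_mono2) auto
  also have "M powr g \<le> l * Q t1 powr g + (1 - l) * Q t2 powr g"
    using convex_onD[OF powr_convex[OF g1], of "1 - l" "Q t1" "Q t2"] Qpos t1 t2 l
    by (simp add: M_def)
  also have "\<dots> = l * P t1 + (1 - l) * P t2" using QP t1 t2 by simp
  also have "\<dots> \<le> P (l * t1 + (1 - l) * t2)"
  proof -
    have s1: "l * sqrt (c - a + t1 * a) + (1 - l) * sqrt (c - a + t2 * a)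
        \<le> sqrt (c - a + (l * t1 + (1 - l) * t2) * a)"
    proof -
      have eq: "l * (c - a + t1 * a) + (1 - l) * (c - a + t2 * a) = c - a + (l * t1 + (1 - l) * t2) * a"
        by (simp add: algebra_simps)
      have "c - a + t1 * a \<ge> 0" "c - a + t2 * a \<ge> 0" using K a t1 t2 by auto
      from sqrt_concave[OF this l] show ?thesis by (simp only: eq)
    qed
    have s2: "l * sqrt (t1 * a) + (1 - l) * sqrt (t2 * a)
        \<le> sqrt ((l * t1 + (1 - l) * t2) * a)"
    proof -
      have eq: "l * (t1 * a) + (1 - l) * (t2 * a) = (l * t1 + (1 - l) * t2) * a"
        by (simp add: algebra_simps)
      have "t1 * a \<ge> 0" "t2 * a \<ge> 0" using a t1 t2 by auto
      from sqrt_concave[OF this l] show ?thesis by (simp only: eq)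
    qed
    have "l * P t1 + (1 - l) * P t2 = sqrt C / (c - a) *
       ((l * sqrt (c - a + t1 * a) + (1 - l) * sqrt (c - a + t2 * a)) +
        (l * sqrt (t1 * a) + (1 - l) * sqrt (t2 * a)))"
    proof -
      define kk where "kk = sqrt C / (c - a)"
      have Pk: "P t = kk * (sqrt (c - a + t * a) + sqrt (t * a))" for t
        by (simp add: P_def kk_def)
      show ?thesis unfolding Pk by (simp add: kk_def[symmetric] algebra_simps)
    qed
    also have "\<dots> \<le> sqrt C / (c - a) * (sqrt (c - a + (l * t1 + (1 - l) * t2) * a) +
        sqrt ((l * t1 + (1 - l) * t2) * a))"
      using s1 s2 C K by (intro mult_left_mono) auto
    also have "\<dots> = P (l * t1 + (1 - l) * t2)" by (simp add: P_def)
    finally show ?thesis .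
  qed
  finally have fin: "u powr g \<le> P (l * t1 + (1 - l) * t2)" .
  have tp: "l * t1 + (1 - l) * t2 \<ge> 0" using t1 t2 l by simp
  show ?thesis
    using fin unfolding key[OF a C al tp u K] g_def P_def .
qed



lemma glue:
  fixes S :: "'b::real_vector set" and F :: "'b \<Rightarrow> ereal" and D T :: "'b \<Rightarrow> real"
  assumes a: "a > 0" and C: "C > 0" and al: "alpha \<ge> 2" and cS: "convex S"
    and hF: "\<And>x. x \<in> S \<Longrightarrow> F x = (if D x = 0 then \<infinity> else ereal (VV a C alpha (T x) (D x)))"
    and D0: "\<And>x. D x \<ge> 0"
    and Dc: "\<And>x y l. x \<in> S \<Longrightarrow> y \<in> S \<Longrightarrow> 0 \<le> l \<Longrightarrow> l \<le> 1 \<Longrightarrow>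
               D (l *\<^sub>R x + (1 - l) *\<^sub>R y) \<le> l * D x + (1 - l) * D y"
    and Tl: "\<And>x y l. x \<in> S \<Longrightarrow> y \<in> S \<Longrightarrow> 0 \<le> l \<Longrightarrow> l \<le> 1 \<Longrightarrow>
               T (l *\<^sub>R x + (1 - l) *\<^sub>R y) = l * T x + (1 - l) * T y"
    and T0: "\<And>x. x \<in> S \<Longrightarrow> T x \<ge> 0"
  shows "quasiconcave_on S F"
  unfolding quasiconcave_on_def
proof (intro ballI)
  fix x y l assume x: "x \<in> S" and y: "y \<in> S" and l: "l \<in> {0..1::real}"
  have l0: "0 \<le> l" and l1: "l \<le> 1" using l by auto
  define z where "z = l *\<^sub>R x + (1 - l) *\<^sub>R y"
  have zS: "z \<in> S" unfolding z_def using convexD[OF cS x y, of l "1 - l"] l0 l1 by simp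
  have Tz: "T z = l * T x + (1 - l) * T y" unfolding z_def by (rule Tl[OF x y l0 l1])
  have Dz: "D z \<le> l * D x + (1 - l) * D y" unfolding z_def by (rule Dc[OF x y l0 l1])
  have "min (F x) (F y) \<le> F z"
  proof (cases "D z = 0")
    case True then show ?thesis by (simp add: hF[OF zS])
  next
    case False
    then have uz: "D z > 0" using D0[of z] by simp
    have Fz: "F z = ereal (VV a C alpha (l * T x + (1 - l) * T y) (D z))"
      using False by (simp add: hF[OF zS] Tz)
    have cor: "c \<le> VV a C alpha (l * T x + (1 - l) * T y) (D z)"
      if "0 < D x \<Longrightarrow> c \<le> VV a C alpha (T x) (D x)" "0 < D y \<Longrightarrow> c \<le> VV a C alpha (T y) (D y)"
      for c
      by (rule core[OF a C al T0[OF x] T0[OF y] l0 l1 uz Dz D0 D0 that])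
    show ?thesis
    proof (cases "D x = 0")
      case dx: True
      show ?thesis
      proof (cases "D y = 0")
        case True
        then have "D z \<le> 0" using Dz dx by simp
        then show ?thesis using uz by simp
      next
        case False
        then have "VV a C alpha (T y) (D y) \<le> VV a C alpha (l * T x + (1 - l) * T y) (D z)"
          using dx by (intro cor) auto
        then show ?thesis using dx False by (simp add: hF[OF x] hF[OF y] Fz)
      qed
    next
      case dx: False
      show ?thesis
      proof (cases "D y = 0")
        case True
        then have "VV a C alpha (T x) (D x) \<le> VV a C alpha (l * T x + (1 - l) * T y) (D z)"
          by (intro cor) auto
        then show ?thesis using dx True by (simp add: hF[OF x] hF[OF y] Fz)
      next
        case False
        then have "min (VV a C alpha (T x) (D x)) (VV a C alpha (T y) (D y))
            \<le> VV a C alpha (l * T x + (1 - l) * T y) (D z)"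
          by (intro cor) auto
        then show ?thesis using dx False by (simp add: hF[OF x] hF[OF y] Fz min_def split: if_splits)
      qed
    qed
  qed
  then show "min (F x) (F y) \<le> F (l *\<^sub>R x + (1 - l) *\<^sub>R y)" by (simp add: z_def)
qed

lemma normc:
  fixes x y d :: "'a::real_normed_vector"
  assumes "0 \<le> l" "l \<le> 1"
  shows "norm (l *\<^sub>R x + (1 - l) *\<^sub>R y - d) \<le> l * norm (x - d) + (1 - l) * norm (y - d)"
proof -
  have "l *\<^sub>R x + (1 - l) *\<^sub>R y - d = l *\<^sub>R (x - d) + (1 - l) *\<^sub>R (y - d)"
    by (simp add: algebra_simps)
  then have "norm (l *\<^sub>R x + (1 - l) *\<^sub>R y - d) \<le> norm (l *\<^sub>R (x - d)) + norm ((1 - l) *\<^sub>R (y - d))"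
    using norm_triangle_ineq by metis
  then show ?thesis using assms by simp
qed

lemma fj_val:
  fixes s d r :: "'a::euclidean_space"
  assumes "rho \<ge> 0" "s \<noteq> d" "xs > 0" "Ps > 0" "xr > 0" "Pr > 0"
  shows "fj alpha Ps Pr xs xr s d rho r =
    (if norm (r - d) = 0 then \<infinity> else
      ereal (VV (xs * Ps / norm (s - d) powr alpha) (xr * Pr) alpha (rho\<^sup>2) (norm (r - d))))"
proof -
  have a0: "xs * Ps / norm (s - d) powr alpha > 0" using assms by simp
  show ?thesis
  proof (cases "r = d")
    case True
    then show ?thesis using assms a0
      by (simp add: fj_def snr_def esqrt_def)
  next
    case False
    have "xr * Pr / norm (r - d) powr alpha \<ge> 0" using assms by simp
    then show ?thesis using assms a0 False
      by (simp add: fj_def snr_def esqrt_def VV_def)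
  qed
qed

lemma gj_val:
  fixes s d r :: "'a::euclidean_space"
  assumes "0 \<le> rho" "rho < 1" "s \<noteq> d" "xs > 0" "Ps > 0" "xsr > 0"
  shows "gj alpha Ps xs xsr s d rho r =
    (if norm (r - s) = 0 then \<infinity> else
      ereal (VV ((1 - rho\<^sup>2) * (xs * Ps / norm (s - d) powr alpha)) ((1 - rho\<^sup>2) * (xsr * Ps)) alpha 0 (norm (r - s))))"
proof -
  have a0: "xs * Ps / norm (s - d) powr alpha > 0" using assms by simp
  have "rho\<^sup>2 < 1\<^sup>2" using assms by (intro power_strict_mono) auto
  then have c0: "1 - rho\<^sup>2 > 0" by simp
  show ?thesis
  proof (cases "r = s")
    case True
    then show ?thesis using assms a0 c0
      by (simp add: gj_def snr_def)
  next
    case False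
    then show ?thesis using assms a0 c0 False
      by (simp add: gj_def snr_def VV_def norm_minus_commute algebra_simps)
  qed
qed



theorem lemma3:
  fixes N :: nat and alpha Ps Pr xi_sr :: real
    and xi_sj xi_rj :: "nat \<Rightarrow> real"
    and s :: "'a::euclidean_space" and dst :: "nat \<Rightarrow> 'a"
  assumes "N \<ge> 1" and "alpha \<ge> 2" and "Ps > 0" and "Pr > 0" and "xi_sr > 0"
    and "\<forall>j\<in>{1..N}. xi_sj j > 0 \<and> xi_rj j > 0"
    and "\<forall>j\<in>{1..N}. s \<noteq> dst j"
  shows "\<forall>j\<in>{1..N}.
           (\<forall>rho\<in>{0..1::real}.
              quasiconcave_on UNIV (\<lambda>r. fj alpha Ps Pr (xi_sj j) (xi_rj j) s (dst j) rho r)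
            \<and> quasiconcave_on UNIV (\<lambda>r. gj alpha Ps (xi_sj j) xi_sr s (dst j) rho r))
         \<and> quasiconcave_on ({0..1::real} \<times> (UNIV :: 'a set))
              (\<lambda>(t, r). fj alpha Ps Pr (xi_sj j) (xi_rj j) s (dst j) (sqrt t) r)"
proof (intro ballI conjI)
  fix j assume j: "j \<in> {1..N}"
  define d where "d = dst j"
  have sd: "s \<noteq> d" using assms(7) j by (simp add: d_def)
  have xs: "xi_sj j > 0" and xr: "xi_rj j > 0" using assms(6) j by auto
  define a0 where "a0 = xi_sj j * Ps / norm (s - d) powr alpha"
  have a0: "a0 > 0" using xs assms(3) sd by (simp add: a0_def)
  have C: "xi_rj j * Pr > 0" using xr assms(4) by simp
  have al: "alpha \<ge> 2" by (rule assms(2))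
  show "quasiconcave_on ({0..1::real} \<times> (UNIV :: 'a set))
              (\<lambda>(t, r). fj alpha Ps Pr (xi_sj j) (xi_rj j) s (dst j) (sqrt t) r)"
    unfolding d_def[symmetric]
  proof (rule glue[OF a0 C al, where D = "\<lambda>p. norm (snd p - d)" and T = fst])
    show "convex ({0..1::real} \<times> (UNIV :: 'a set))" by (intro convex_Times) auto
  next
    fix p :: "real \<times> 'a" assume "p \<in> {0..1} \<times> UNIV"
    then obtain t r where p: "p = (t, r)" and t: "0 \<le> t" by auto
    show "(case p of (t, r) \<Rightarrow> fj alpha Ps Pr (xi_sj j) (xi_rj j) s d (sqrt t) r) =
      (if norm (snd p - d) = 0 then \<infinity> else ereal (VV a0 (xi_rj j * Pr) alpha (fst p) (norm (snd p - d))))"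
      using fj_val[of "sqrt t" s d "xi_sj j" Ps "xi_rj j" Pr alpha r] sd xs xr assms(3,4) t
      by (simp add: p a0_def)
  next
    fix x y :: "real \<times> 'a" and l :: real
    assume "0 \<le> l" "l \<le> 1"
    then show "norm (snd (l *\<^sub>R x + (1 - l) *\<^sub>R y) - d) \<le> l * norm (snd x - d) + (1 - l) * norm (snd y - d)"
      using normc[of l "snd x" "snd y" d] by simp
  qed auto
  fix rho :: real assume rho: "rho \<in> {0..1}"
  show "quasiconcave_on UNIV (\<lambda>r. fj alpha Ps Pr (xi_sj j) (xi_rj j) s (dst j) rho r)"
    unfolding d_def[symmetric]
  proof (rule glue[OF a0 C al, where D = "\<lambda>r. norm (r - d)" and T = "\<lambda>r. rho\<^sup>2"])
    fix r :: 'a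
    show "fj alpha Ps Pr (xi_sj j) (xi_rj j) s d rho r =
      (if norm (r - d) = 0 then \<infinity> else ereal (VV a0 (xi_rj j * Pr) alpha (rho\<^sup>2) (norm (r - d))))"
      using fj_val[of rho s d "xi_sj j" Ps "xi_rj j" Pr alpha r] sd xs xr assms(3,4) rho
      by (simp add: a0_def)
  next
    fix x y :: 'a and l :: real
    assume "0 \<le> l" "l \<le> 1"
    then show "norm (l *\<^sub>R x + (1 - l) *\<^sub>R y - d) \<le> l * norm (x - d) + (1 - l) * norm (y - d)"
      by (rule normc)
  qed (auto simp: algebra_simps)
  show "quasiconcave_on UNIV (\<lambda>r. gj alpha Ps (xi_sj j) xi_sr s (dst j) rho r)"
    unfolding d_def[symmetric]
  proof (cases "rho = 1")
    case True
    then show "quasiconcave_on UNIV (\<lambda>r. gj alpha Ps (xi_sj j) xi_sr s d rho r)"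
      by (simp add: quasiconcave_on_def gj_def zero_ereal_def[symmetric])
  next
    case False
    then have r1: "rho < 1" using rho by simp
    have r0: "0 \<le> rho" using rho by simp
    have "rho\<^sup>2 < 1\<^sup>2" using r0 r1 by (intro power_strict_mono) auto
    then have c0: "1 - rho\<^sup>2 > 0" by simp
    have a1: "(1 - rho\<^sup>2) * a0 > 0" using c0 a0 by simp
    have C1: "(1 - rho\<^sup>2) * (xi_sr * Ps) > 0" using c0 assms(3,5) by simp
    show "quasiconcave_on UNIV (\<lambda>r. gj alpha Ps (xi_sj j) xi_sr s d rho r)"
    proof (rule glue[OF a1 C1 al, where D = "\<lambda>r. norm (r - s)" and T = "\<lambda>r. 0"])
      fix r :: 'a
      show "gj alpha Ps (xi_sj j) xi_sr s d rho r =
        (if norm (r - s) = 0 then \<infinity> else ereal (VV ((1 - rho\<^sup>2) * a0) ((1 - rho\<^sup>2) * (xi_sr * Ps)) alpha 0 (norm (r - s))))"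
        using gj_val[OF r0 r1 sd xs assms(3,5), of alpha r] by (simp add: a0_def)
    next
      fix x y :: 'a and l :: real
      assume "0 \<le> l" "l \<le> 1"
      then show "norm (l *\<^sub>R x + (1 - l) *\<^sub>R y - s) \<le> l * norm (x - s) + (1 - l) * norm (y - s)"
        by (rule normc)
    qed auto
  qed
qed


end
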